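(* Under the degree-corrected stochastic block model $DCSBM(n,P,\Theta,Z)$, the matrix $X^*$ has exactly $K$ distinct rows, and for any nodes $i\ne j$ with $g_i=g_j$, the $i$-th row of $X^*$ equals the $j$-th row of $X^*$.
   Context: $n$ nodes, each in exactly one of $K$ communities, $g_i$ the community of node $i$, every community nonempty; $Z\in\{0,1\}^{n\times K}$ with $Z_{ik}=1$ iff $g_i=k$. $P$ is a $K\times K$ symmetric, nonnegative, nonsingular, irreducible matrix; $\theta\in\mathbb{R}^n$ has positive entries and $\Theta=\mathrm{diag}(\theta)$. Let $\Omega=\Theta ZPZ'\Theta$, which has rank $K$. Let $\lambda_1,\dots,\lambda_K$ be the nonzero eigenvalues of $\Omega$ in descending order of magnitude, $E_\Omega=\mathrm{diag}(\lambda_1,\dots,\lambda_K)$, and $V_\Omega$ the $n\times K$ matrix whose $k$-th column is a unit-norm eigenvector of $\Omega$ for $\lambda_k$. Set $X=V_\Omega E_\Omega$; $X^*$ is obtained by dividing each row of $X$ by its Euclidean norm. *)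

theory Defs
  imports "HOL-Analysis.Analysis"
begin

definition diag_mat :: "real ^ 'n \<Rightarrow> real ^ 'n ^ 'n" where
  "diag_mat d = (\<chi> i j. if i = j then d $ i else 0)"

primrec matpow :: "real ^ 'n ^ 'n \<Rightarrow> nat \<Rightarrow> real ^ 'n ^ 'n" where
  "matpow A 0 = mat 1"
| "matpow A (Suc m) = A ** matpow A m"

definition irreducible_mat :: "real ^ 'n ^ 'n \<Rightarrow> bool" where
  "irreducible_mat A \<longleftrightarrow> (\<forall>i j. \<exists>m. matpow A m $ i $ j > 0)"

definition membership_mat :: "('n \<Rightarrow> 'k) \<Rightarrow> real ^ 'k ^ 'n" where
  "membership_mat g = (\<chi> i k. if g i = k then 1 else 0)"

definition row_normalize :: "real ^ 'k ^ 'n \<Rightarrow> real ^ 'k ^ 'n" where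
  "row_normalize X = (\<chi> i. (1 / norm (X $ i)) *\<^sub>R (X $ i))"

end

theory Submission
  imports Defs
begin

lemma mult_diag_entry: "(A ** diag_mat d) $ i $ k = A $ i $ k * d $ k"
proof -
  have "(A ** diag_mat d) $ i $ k = (\<Sum>j\<in>UNIV. A $ i $ j * (if j = k then d $ j else 0))"
    by (simp add: matrix_matrix_mult_def diag_mat_def)
  also have "\<dots> = A $ i $ k * d $ k"
    by (simp add: if_distrib cong: if_cong)
  finally show ?thesis .
qed

lemma diag_mult_entry: "(diag_mat d ** A) $ i $ k = d $ i * A $ i $ k"
proof -
  have "(diag_mat d ** A) $ i $ k = (\<Sum>j\<in>UNIV. (if i = j then d $ i else 0) * A $ j $ k)"
    by (simp add: matrix_matrix_mult_def diag_mat_def)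
  also have "\<dots> = (\<Sum>j\<in>UNIV. if i = j then d $ i * A $ j $ k else 0)"
    by (rule sum.cong) auto
  also have "\<dots> = d $ i * A $ i $ k"
    by simp
  finally show ?thesis .
qed

lemma gen_row: assumes "\<And>a. C $ i $ a = t * (if g i = a then 1 else 0)"
  shows "(C ** B) $ i = t *\<^sub>R B $ (g i)"
proof (rule vec_eq_iff[THEN iffD2], rule allI)
  fix k
  have "(C ** B) $ i $ k = (\<Sum>a\<in>UNIV. (t * (if g i = a then 1 else 0)) * B $ a $ k)"
    by (simp add: matrix_matrix_mult_def assms)
  also have "\<dots> = (\<Sum>a\<in>UNIV. if g i = a then t * B $ a $ k else 0)"
    by (rule sum.cong) auto
  also have "\<dots> = t * B $ (g i) $ k"
    by simp
  finally show "(C ** B) $ i $ k = (t *\<^sub>R B $ (g i)) $ k"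
    by simp
qed

lemma diag_Z_entry: "(diag_mat \<theta> ** membership_mat g ** B) $ i = \<theta> $ i *\<^sub>R B $ (g i)"
proof -
  have e: "(diag_mat \<theta> ** membership_mat g) $ i $ a = \<theta> $ i * (if g i = a then 1 else 0)" for a
    by (simp add: diag_mult_entry membership_mat_def)
  show ?thesis by (rule gen_row[where g=g, OF e])
qed

theorem lemma2:
  fixes g :: "'n::finite \<Rightarrow> 'k::{finite, linorder}"
    and P :: "((real, 'k) vec, 'k) vec"
    and \<theta> :: "(real, 'n) vec"
    and lam :: "'k \<Rightarrow> real"
    and V :: "((real, 'k) vec, 'n) vec"
  assumes communities_nonempty: "surj g"
    and P_sym: "transpose P = P"
    and P_nonneg: "\<forall>a b. P $ a $ b \<ge> 0"
    and P_nonsing: "invertible P"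
    and P_irred: "irreducible_mat P"
    and theta_pos: "\<forall>i. \<theta> $ i > 0"
    and rank_Omega: "rank (diag_mat \<theta> ** membership_mat g ** P ** transpose (membership_mat g) ** diag_mat \<theta>) = CARD('k)"
    and lam_nonzero: "\<forall>k. lam k \<noteq> 0"
    and lam_order: "\<forall>k l. k < l \<longrightarrow> \<bar>lam l\<bar> \<le> \<bar>lam k\<bar>"
    and V_orthonormal: "transpose V ** V = mat 1"
    and V_eigen: "\<forall>k. (diag_mat \<theta> ** membership_mat g ** P ** transpose (membership_mat g) ** diag_mat \<theta>) *v column k V = lam k *\<^sub>R column k V"
  shows "card (range (\<lambda>i. row_normalize (V ** diag_mat (\<chi> k. lam k)) $ i)) = CARD('k)
       \<and> (\<forall>i j. i \<noteq> j \<and> g i = g j \<longrightarrow>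
            row_normalize (V ** diag_mat (\<chi> k. lam k)) $ i = row_normalize (V ** diag_mat (\<chi> k. lam k)) $ j)"
proof -
  define D where "D = diag_mat \<theta>"
  define Z where "Z = membership_mat g"
  define Om where "Om = D ** Z ** P ** transpose Z ** D"
  define Lam where "Lam = diag_mat (\<chi> k. lam k)"
  define X where "X = V ** Lam"
  define B where "B = P ** transpose Z ** D ** V"
  have XOm: "X = Om ** V"
  proof (rule vec_eq_iff[THEN iffD2], rule allI, rule vec_eq_iff[THEN iffD2], rule allI)
    fix i k
    have "(Om ** V) $ i $ k = (Om *v column k V) $ i"
      by (simp add: matrix_matrix_mult_def matrix_vector_mult_def column_def)
    also have "\<dots> = lam k * V $ i $ k"
      using V_eigen by (simp add: Om_def D_def Z_def column_def)
    finally show "X $ i $ k = (Om ** V) $ i $ k"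
      by (simp add: X_def Lam_def mult_diag_entry)
  qed
  have XB: "X = D ** Z ** B"
    unfolding XOm Om_def B_def by (simp add: matrix_mul_assoc)
  have Xrow: "X $ i = \<theta> $ i *\<^sub>R B $ (g i)" for i
    unfolding XB D_def Z_def by (rule diag_Z_entry)
  define f where "f a = (1 / norm (B $ a)) *\<^sub>R B $ a" for a
  have rn: "row_normalize X $ i = f (g i)" for i
  proof -
    have t: "\<theta> $ i > 0" using theta_pos by auto
    show ?thesis
      unfolding row_normalize_def f_def Xrow using t by auto
  qed
  define Li where "Li = diag_mat (\<chi> k. 1 / lam k)"
  have LiLam: "Li ** Lam = mat 1"
  proof (rule vec_eq_iff[THEN iffD2], rule allI, rule vec_eq_iff[THEN iffD2], rule allI)
    fix i k
    show "(Li ** Lam) $ i $ k = mat 1 $ i $ k"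
      using lam_nonzero unfolding Lam_def mult_diag_entry by (simp add: mat_def Li_def diag_mat_def)
  qed
  have "transpose V ** X = Lam"
    unfolding X_def by (metis matrix_mul_assoc V_orthonormal matrix_mul_lid)
  hence "(transpose V ** (D ** Z)) ** B = Lam"
    unfolding XB by (simp add: matrix_mul_assoc)
  hence "(Li ** (transpose V ** (D ** Z))) ** B = mat 1"
    using LiLam by (metis matrix_mul_assoc)
  hence BR: "B ** (Li ** (transpose V ** (D ** Z))) = mat 1"
    using matrix_left_right_inverse by blast
  define R where "R = Li ** (transpose V ** (D ** Z))"
  have BRe: "(\<Sum>j\<in>UNIV. B $ a $ j * R $ j $ c) = (if a = c then 1 else 0)" for a c
  proof -
    have "(B ** R) $ a $ c = (if a = c then 1 else 0)"
      using BR by (simp add: R_def mat_def)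
    thus ?thesis by (simp add: matrix_matrix_mult_def)
  qed
  have Bnz: "B $ a \<noteq> 0" for a
  proof
    assume "B $ a = 0"
    hence "(\<Sum>j\<in>UNIV. B $ a $ j * R $ j $ a) = 0" by simp
    with BRe[of a a] show False by simp
  qed
  have finj: "inj f"
  proof (rule injI, rule ccontr)
    fix a b assume fab: "f a = f b" and ab: "a \<noteq> b"
    have "(\<Sum>j\<in>UNIV. f a $ j * R $ j $ a) = (1 / norm (B $ a)) * (\<Sum>j\<in>UNIV. B $ a $ j * R $ j $ a)"
      by (simp add: f_def sum_distrib_left mult.assoc)
    also have "\<dots> = 1 / norm (B $ a)" using BRe[of a a] by simp
    finally have 1: "(\<Sum>j\<in>UNIV. f a $ j * R $ j $ a) = 1 / norm (B $ a)" .
    have "(\<Sum>j\<in>UNIV. f b $ j * R $ j $ a) = (1 / norm (B $ b)) * (\<Sum>j\<in>UNIV. B $ b $ j * R $ j $ a)"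
      by (simp add: f_def sum_distrib_left mult.assoc)
    also have "\<dots> = 0" using BRe[of b a] ab by simp
    finally have 2: "(\<Sum>j\<in>UNIV. f b $ j * R $ j $ a) = 0" .
    from 1 2 fab have "1 / norm (B $ a) = 0" by simp
    with Bnz[of a] show False by simp
  qed
  have "range (\<lambda>i. row_normalize X $ i) = range f"
    proof -
    have "range (\<lambda>i. row_normalize X $ i) = f ` (g ` UNIV)" by (auto simp: rn)
    thus ?thesis using communities_nonempty by simp
  qed
  hence "card (range (\<lambda>i. row_normalize X $ i)) = CARD('k)"
    using finj by (simp add: card_image)
  moreover have "\<forall>i j. i \<noteq> j \<and> g i = g j \<longrightarrow> row_normalize X $ i = row_normalize X $ j"
    by (simp add: rn)
  ultimately show ?thesis unfolding X_def Lam_def by blast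
qed

end
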